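(* (i) In the full-batch case $L^{(s)}\equiv L$ for all $s$, for every $m\ge1$, $l\ge1$, $n\ge0$, one has $E_{\mathfrak c_m}^{(l,n)}=v_{m,l}^{(n)}\,(\nabla^2L)^{m-1}\nabla L$; in particular $v_m^{(n)}:=v_{m,1}^{(n)}$ is the coefficient of the chain term, so $c_m^{(n)}$ contains the term $-\beta v_m^{(n)}(\nabla^2L)^{m-1}\nabla L$ for $m\ge2$. (ii) For all $m\ge2$ and $n\ge1$, $$v_m^{(n)}=v_{m-1}^{(n)}+\beta\sum_{j=1}^{m-1}v_j^{(n-1)}v_{m-j}^{(n)}+\beta v_m^{(n-1)}.$$ (iii) For each $m$ the limit $v_m^{(\infty)}:=\lim_{n\to\infty}v_m^{(n)}$ exists, $v_1^{(\infty)}=(1-\beta)^{-1}$, and $v_m^{(\infty)}=\frac{v_{m-1}^{(\infty)}}{1-\beta}+\frac{\beta}{1-\beta}\sum_{j=1}^{m-1}v_j^{(\infty)}v_{m-j}^{(\infty)}$ for $m\ge2$. (iv) The generating function $g_\beta(x):=\sum_{m\ge0}v_{m+1}^{(\infty)}x^m$ equals $$g_\beta(x)=\frac{1-\beta-x-\sqrt{(1-\beta-x)^2-4\beta x}}{2\beta x}$$ (as a power series at $x=0$, with the branch of the square root equal to $1-\beta$ at $x=0$). (v) For $m\ge1$, $v_{m+1}^{(\infty)}=N_m(\beta)/(1-\beta)^{2m+1}$, where $N_m(\beta)=\sum_{k=1}^m\frac1m\binom mk\binom m{k-1}\beta^{m-k}$ are the Narayana polynomials.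
   Context: Fix $\beta\in(0,1)$. Empty sums are $0$. For integers $n\ge0$, $l\ge1$, define $v_{1,l}^{(n)}=\sum_{b=0}^{n-l}\beta^b$ and for $m\ge2$, $v_{m,l}^{(n)}=\sum_{b=0}^{n-l}\beta^b\sum_{l_1=1}^{l+b}v_{m-1,l_1}^{(n)}$; set $v_m^{(n)}:=v_{m,1}^{(n)}$ (so $v_1^{(n)}=\sum_{b=0}^{n-1}\beta^b$). The chain $\mathfrak c_m$ is the rooted tree with $m$ vertices in which every vertex has at most one child (a path rooted at an endpoint). For a rooted tree $\tau$ whose root has children subtrees $\tau_1,\dots,\tau_\ell$ and losses $L^{(s)}$, $E_\tau^{(l,n)}=\sum_{b=0}^{n-l}\beta^b\nabla^{\ell+1}L^{(n-l-b)}\big[\sum_{l_1=1}^{l+b}E_{\tau_1}^{(l_1,n)},\dots,\sum_{l_\ell=1}^{l+b}E_{\tau_\ell}^{(l_\ell,n)}\big]$, where $\nabla^k$ is the $k$-th derivative tensor; by the theorem on the form of memoryless iteration coefficients, the $m$-th memoryless coefficient of HB is $c_m^{(n)}=-\beta\sum_{\tau}\sigma(\tau)^{-1}E_\tau^{(1,n)}$ over unlabeled rooted trees with $m$ vertices ($\sigma$ the automorphism count), and the chain has $\sigma(\mathfrak c_m)=1$. *)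

theory Defs
  imports "HOL-Analysis.Analysis"
begin

text \<open>The sum over b = 0..n-l is written as b < Suc n - l,
  which is empty when l > n (truncated subtraction).  The index m starts at 1;
  the value at m = 0 is an unused dummy.\<close>
fun vv :: "real \<Rightarrow> nat \<Rightarrow> nat \<Rightarrow> nat \<Rightarrow> real" where
  "vv \<beta> 0 l n = 0"
| "vv \<beta> (Suc 0) l n = (\<Sum>b<Suc n - l. \<beta> ^ b)"
| "vv \<beta> (Suc (Suc m)) l n =
     (\<Sum>b<Suc n - l. \<beta> ^ b * (\<Sum>l1=1..l+b. vv \<beta> (Suc m) l1 n))"

definition v :: "real \<Rightarrow> nat \<Rightarrow> nat \<Rightarrow> real" where
  "v \<beta> m n = vv \<beta> m 1 n"

definition vinf :: "real \<Rightarrow> nat \<Rightarrow> real" where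
  "vinf \<beta> m = lim (\<lambda>n. v \<beta> m n)"

text \<open>Unlabeled rooted trees (root with an ordered list of children subtrees).\<close>
datatype rtree = Node "rtree list"

definition chain :: "nat \<Rightarrow> rtree" where
  "chain m = ((\<lambda>t. Node [t]) ^^ (m - 1)) (Node [])"

text \<open>Derivative tensors: D s k xs stands for the k-th derivative tensor of the loss L^{(s)}
  contracted with the k-1 vectors xs, i.e. \<nabla>^k L^{(s)}[xs] (a vector).
  So D s 1 [] = \<nabla>L^{(s)} and D s 2 [x] = \<nabla>^2 L^{(s)} x.\<close>
definition multilinear_family :: "(nat \<Rightarrow> nat \<Rightarrow> 'a::real_vector list \<Rightarrow> 'a) \<Rightarrow> bool" where
  "multilinear_family D \<longleftrightarrow>
     (\<forall>s k xs ys. length xs + length ys + 2 = k \<longrightarrow> linear (\<lambda>x. D s k (xs @ x # ys)))"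

fun E :: "real \<Rightarrow> (nat \<Rightarrow> nat \<Rightarrow> 'a::real_vector list \<Rightarrow> 'a) \<Rightarrow> rtree \<Rightarrow> nat \<Rightarrow> nat \<Rightarrow> 'a" where
  "E \<beta> D (Node ts) l n =
     (\<Sum>b<Suc n - l. \<beta> ^ b *\<^sub>R
        D (n - l - b) (length ts + 1) (map (\<lambda>t. \<Sum>l1=1..l+b. E \<beta> D t l1 n) ts))"

definition narayana :: "nat \<Rightarrow> real \<Rightarrow> real" where
  "narayana m \<beta> = (\<Sum>k=1..m. (1 / real m) * real (m choose k) * real (m choose (k - 1)) * \<beta> ^ (m - k))"

end

theory Submission
  imports Defs "HOL-Computational_Algebra.Formal_Power_Series"
begin

lemma chain_Suc: "chain (Suc (Suc m)) = Node [chain (Suc m)]"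
  by (simp add: chain_def)

lemma chain_one: "chain (Suc 0) = Node []" by (simp add: chain_def)

lemma E_chain:
  fixes D :: "nat \<Rightarrow> nat \<Rightarrow> 'a::real_vector list \<Rightarrow> 'a"
  assumes ml: "multilinear_family D" and fb: "\<forall>s. D s = D 0"
  shows "E \<beta> D (chain (Suc m)) l n = vv \<beta> (Suc m) l n *\<^sub>R (((\<lambda>x. D 0 2 [x]) ^^ m) (D 0 1 []))"
proof (induction m arbitrary: l)
  case 0
  have "E \<beta> D (chain (Suc 0)) l n = (\<Sum>b<Suc n - l. \<beta> ^ b *\<^sub>R D 0 1 [])"
    unfolding chain_one by (simp, metis fb)
  also have "\<dots> = vv \<beta> (Suc 0) l n *\<^sub>R D 0 1 []"
    by (simp add: scaleR_sum_left)
  finally show ?case by simp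
next
  case (Suc m)
  let ?w = "((\<lambda>x. D 0 2 [x]) ^^ m) (D 0 1 [])"
  have lin: "linear (\<lambda>x. D 0 2 [x])"
    using ml unfolding multilinear_family_def
    using ml[unfolded multilinear_family_def, rule_format, of "[]" "[]" 2 0] by simp
  have inner: "(\<Sum>l1=1..l+b. E \<beta> D (chain (Suc m)) l1 n) = (\<Sum>l1=1..l+b. vv \<beta> (Suc m) l1 n) *\<^sub>R ?w" for b
    using Suc.IH by (simp add: scaleR_sum_left)
  have "E \<beta> D (chain (Suc (Suc m))) l n =
     (\<Sum>b<Suc n - l. \<beta> ^ b *\<^sub>R D 0 2 [(\<Sum>l1=1..l+b. E \<beta> D (chain (Suc m)) l1 n)])"
    unfolding chain_Suc by (simp, metis fb numeral_2_eq_2)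
  also have "\<dots> = (\<Sum>b<Suc n - l. (\<beta> ^ b * (\<Sum>l1=1..l+b. vv \<beta> (Suc m) l1 n)) *\<^sub>R D 0 2 [?w])"
    unfolding inner by (simp add: linear_scale[OF lin])
  also have "\<dots> = vv \<beta> (Suc (Suc m)) l n *\<^sub>R D 0 2 [?w]"
    by (simp add: scaleR_sum_left)
  finally show ?case by simp
qed


lemma sum_Suc_split: "(\<Sum>i=1..Suc k. f i) = f 1 + (\<Sum>i=1..k. f (Suc i))"
proof -
  have "(\<Sum>i=1..Suc k. f i) = f 1 + (\<Sum>i=Suc 1..Suc k. f i)"
    by (subst sum.atLeast_Suc_atMost) auto
  also have "(\<Sum>i=Suc 1..Suc k. f i) = (\<Sum>i=1..k. f (Suc i))"
    by (rule sum.shift_bounds_cl_Suc_ivl)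
  finally show ?thesis .
qed

lemma vv_Suc_Suc: "vv \<beta> (Suc (Suc m)) l n = (\<Sum>b<Suc n - l. \<beta> ^ b * (\<Sum>l1=1..l+b. vv \<beta> (Suc m) l1 n))"
  by simp

lemma vv_shift:
  "vv \<beta> (Suc m) (Suc l) (Suc n) = vv \<beta> (Suc m) l n
     + (\<Sum>j=1..m. vv \<beta> j l n * v \<beta> (Suc m - j) (Suc n))"
proof (induction m arbitrary: l)
  case 0
  then show ?case by simp
next
  case (Suc m)
  define f where "f l1 = vv \<beta> (Suc m) l1 (Suc n)" for l1
  have inner: "(\<Sum>l1=1..Suc (l+b). f l1) = v \<beta> (Suc m) (Suc n) + (\<Sum>l1=1..l+b. vv \<beta> (Suc m) l1 n)
      + (\<Sum>j=1..m. v \<beta> (Suc m - j) (Suc n) * (\<Sum>l1=1..l+b. vv \<beta> j l1 n))" for b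
  proof -
    have "(\<Sum>l1=1..Suc (l+b). f l1) = f 1 + (\<Sum>l1=1..l+b. f (Suc l1))" by (rule sum_Suc_split)
    also have "(\<Sum>l1=1..l+b. f (Suc l1)) = (\<Sum>l1=1..l+b. vv \<beta> (Suc m) l1 n
        + (\<Sum>j=1..m. vv \<beta> j l1 n * v \<beta> (Suc m - j) (Suc n)))"
      unfolding f_def using Suc.IH by simp
    also have "\<dots> = (\<Sum>l1=1..l+b. vv \<beta> (Suc m) l1 n) + (\<Sum>j=1..m. v \<beta> (Suc m - j) (Suc n) * (\<Sum>l1=1..l+b. vv \<beta> j l1 n))"
      apply (simp add: sum.distrib sum_distrib_left mult.commute)
      by (rule sum.swap)
    finally show ?thesis unfolding f_def v_def by simp
  qed
  have "vv \<beta> (Suc (Suc m)) (Suc l) (Suc n) = (\<Sum>b<Suc n - l. \<beta> ^ b * (\<Sum>l1=1..Suc (l+b). f l1))"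
    unfolding f_def by simp
  also have "\<dots> = v \<beta> (Suc m) (Suc n) * vv \<beta> (Suc 0) l n + vv \<beta> (Suc (Suc m)) l n
     + (\<Sum>j=1..m. v \<beta> (Suc m - j) (Suc n) * (\<Sum>b<Suc n - l. \<beta> ^ b * (\<Sum>l1=1..l+b. vv \<beta> j l1 n)))"
    unfolding inner apply (simp add: algebra_simps sum.distrib sum_distrib_left sum_distrib_right)
    by (rule sum.swap)
  also have "(\<Sum>j=1..m. v \<beta> (Suc m - j) (Suc n) * (\<Sum>b<Suc n - l. \<beta> ^ b * (\<Sum>l1=1..l+b. vv \<beta> j l1 n)))
      = (\<Sum>j=1..m. vv \<beta> (Suc j) l n * v \<beta> (Suc (Suc m) - Suc j) (Suc n))"
  proof (rule sum.cong[OF refl])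
    fix j assume "j \<in> {1..m}"
    then obtain j' where "j = Suc j'" by (cases j) auto
    then show "v \<beta> (Suc m - j) (Suc n) * (\<Sum>b<Suc n - l. \<beta> ^ b * (\<Sum>l1=1..l+b. vv \<beta> j l1 n))
       = vv \<beta> (Suc j) l n * v \<beta> (Suc (Suc m) - Suc j) (Suc n)" by simp
  qed
  also have "(\<Sum>j=1..m. vv \<beta> (Suc j) l n * v \<beta> (Suc (Suc m) - Suc j) (Suc n)) =
     (\<Sum>j=1..Suc m. vv \<beta> j l n * v \<beta> (Suc (Suc m) - j) (Suc n)) - vv \<beta> 1 l n * v \<beta> (Suc (Suc m) - 1) (Suc n)"
    by (simp only: sum_Suc_split[of "\<lambda>j. vv \<beta> j l n * v \<beta> (Suc (Suc m) - j) (Suc n)"])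
  finally show ?case by simp
qed

lemma part_ii:
  assumes "2 \<le> m" "1 \<le> n"
  shows "v \<beta> m n = v \<beta> (m - 1) n + \<beta> * (\<Sum>j=1..m-1. v \<beta> j (n - 1) * v \<beta> (m - j) n)
                   + \<beta> * v \<beta> m (n - 1)"
proof -
  define k where "k = m - 2"
  have m: "m = Suc (Suc k)" using assms unfolding k_def by arith
  obtain p where n: "n = Suc p" using assms by (cases n) auto
  have "v \<beta> m n = (\<Sum>b<Suc p. \<beta> ^ b * (\<Sum>l1=1..1+b. vv \<beta> (Suc k) l1 (Suc p)))"
    unfolding m n v_def by simp
  also have "\<dots> = vv \<beta> (Suc k) 1 (Suc p) + (\<Sum>b<p. \<beta> ^ Suc b * (\<Sum>l1=1..Suc (Suc b). vv \<beta> (Suc k) l1 (Suc p)))"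
    by (simp add: sum.lessThan_Suc_shift del: sum.lessThan_Suc)
  also have "(\<Sum>b<p. \<beta> ^ Suc b * (\<Sum>l1=1..Suc (Suc b). vv \<beta> (Suc k) l1 (Suc p))) = \<beta> * vv \<beta> (Suc (Suc k)) 2 (Suc p)"
    by (simp add: sum_distrib_left mult.assoc)
  also have "vv \<beta> (Suc (Suc k)) 2 (Suc p) = vv \<beta> (Suc (Suc k)) 1 p + (\<Sum>j=1..Suc k. vv \<beta> j 1 p * v \<beta> (Suc (Suc k) - j) (Suc p))"
    using vv_shift[of \<beta> "Suc k" 1 p] by (simp add: numeral_2_eq_2)
  finally show ?thesis unfolding m n v_def by (simp add: algebra_simps sum_distrib_left)
qed


lemma vv_nonneg: "0 \<le> \<beta> \<Longrightarrow> 0 \<le> vv \<beta> m l n"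
  by (induction \<beta> m l n rule: vv.induct) (auto intro!: sum_nonneg mult_nonneg_nonneg)

lemma vv_mono: assumes b: "0 \<le> \<beta>" shows "vv \<beta> (Suc m) l n \<le> vv \<beta> (Suc m) l (Suc n)"
proof (induction m arbitrary: l)
  case 0
  show ?case using b
    by (simp, intro sum_mono2) auto
next
  case (Suc m)
  have "vv \<beta> (Suc (Suc m)) l n \<le> (\<Sum>b<Suc n - l. \<beta> ^ b * (\<Sum>l1=1..l+b. vv \<beta> (Suc m) l1 (Suc n)))"
    unfolding vv.simps using b Suc.IH
    by (intro sum_mono mult_left_mono) auto
  also have "\<dots> \<le> vv \<beta> (Suc (Suc m)) l (Suc n)"
    unfolding vv.simps using b
    by (intro sum_mono2) (auto intro!: sum_nonneg mult_nonneg_nonneg vv_nonneg)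
  finally show ?case .
qed

lemma v_mono: "0 \<le> \<beta> \<Longrightarrow> 1 \<le> m \<Longrightarrow> v \<beta> m n \<le> v \<beta> m (Suc n)"
  unfolding v_def using vv_mono[of \<beta> "m - 1" 1 n] by simp

lemma v_zero: "1 \<le> m \<Longrightarrow> v \<beta> m 0 = 0"
  unfolding v_def by (cases m; cases "m - 1") auto

lemma v_nonneg: "0 \<le> \<beta> \<Longrightarrow> 0 \<le> v \<beta> m n"
  unfolding v_def by (rule vv_nonneg)

lemma v_one: "v \<beta> 1 n = (\<Sum>b<n. \<beta> ^ b)"
  unfolding v_def by simp


lemma v_bounded:
  assumes b: "0 < \<beta>" "\<beta> < 1" and m: "1 \<le> m"
  shows "\<exists>B. \<forall>n. v \<beta> m n \<le> B"
  using m
proof (induction m rule: less_induct)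
  case (less m)
  show ?case
  proof (cases "m = 1")
    case True
    have "v \<beta> m n \<le> 1 / (1 - \<beta>)" for n
    proof -
      have "(\<lambda>k. \<beta> ^ k) sums (1 / (1 - \<beta>))" using b by (intro geometric_sums) simp
      have "(\<Sum>k<n. \<beta> ^ k) \<le> suminf (\<lambda>k. \<beta> ^ k)"
        by (rule sum_le_suminf) (use \<open>(\<lambda>k. \<beta> ^ k) sums (1 / (1 - \<beta>))\<close> b in \<open>auto simp: sums_iff\<close>)
      then show ?thesis using True v_one \<open>(\<lambda>k. \<beta> ^ k) sums (1 / (1 - \<beta>))\<close> by (metis sums_unique)
    qed
    then show ?thesis by blast
  next
    case False
    then have m2: "2 \<le> m" using less.prems by simp
    have "\<forall>j\<in>{1..m-1}. \<exists>B. \<forall>n. v \<beta> j n \<le> B"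
      using less.IH by auto
    then obtain Bf where Bf: "\<And>j n. j \<in> {1..m-1} \<Longrightarrow> v \<beta> j n \<le> Bf j"
      by metis
    have Bf0: "0 \<le> Bf j" if "j \<in> {1..m-1}" for j
      using Bf[OF that, of 0] v_zero[of j \<beta>] that by simp
    have Bf0': "0 \<le> Bf (m - j)" if "j \<in> {1..m-1}" for j
    proof -
      have "m - j \<in> {1..m-1}" using that by auto
      thus ?thesis by (rule Bf0)
    qed
    have Bfm: "v \<beta> (m - j) n \<le> Bf (m - j)" if "j \<in> {1..m-1}" for j n
    proof -
      have "m - j \<in> {1..m-1}" using that by auto
      thus ?thesis by (rule Bf)
    qed
    define M where "M = (Bf (m-1) + \<beta> * (\<Sum>j=1..m-1. Bf j * Bf (m - j))) / (1 - \<beta>)"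
    have "v \<beta> m n \<le> M" for n
    proof (cases n)
      case 0
      have "0 \<le> M" unfolding M_def using b m2 Bf0
        by (intro divide_nonneg_pos add_nonneg_nonneg mult_nonneg_nonneg sum_nonneg) (auto intro: Bf0')
      then show ?thesis using 0 v_zero[of m \<beta>] m2 by simp
    next
      case (Suc p)
      have rec: "v \<beta> m n = v \<beta> (m - 1) n + \<beta> * (\<Sum>j=1..m-1. v \<beta> j (n - 1) * v \<beta> (m - j) n)
                   + \<beta> * v \<beta> m (n - 1)" using part_ii[OF m2, of n] Suc by simp
      have s: "(\<Sum>j=1..m-1. v \<beta> j (n - 1) * v \<beta> (m - j) n) \<le> (\<Sum>j=1..m-1. Bf j * Bf (m - j))"
        using b by (intro sum_mono mult_mono) (auto intro: Bf v_nonneg Bf0 Bf0' Bfm)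
      have mo: "v \<beta> m (n - 1) \<le> v \<beta> m n" using v_mono[of \<beta> m p] Suc b m2 by simp
      have h1: "\<beta> * (\<Sum>j=1..m-1. v \<beta> j (n - 1) * v \<beta> (m - j) n) \<le> \<beta> * (\<Sum>j=1..m-1. Bf j * Bf (m - j))"
        using s b by (intro mult_left_mono) auto
      have h2: "\<beta> * v \<beta> m (n - 1) \<le> \<beta> * v \<beta> m n" using mo b by (intro mult_left_mono) auto
      have h3: "v \<beta> (m - 1) n \<le> Bf (m - 1)" using Bf[of "m-1" n] m2 by simp
      have "v \<beta> m n \<le> Bf (m-1) + \<beta> * (\<Sum>j=1..m-1. Bf j * Bf (m - j)) + \<beta> * v \<beta> m n"
        using rec h1 h2 h3 by linarith
      then show ?thesis unfolding M_def using b by (simp add: field_simps)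
    qed
    then show ?thesis by blast
  qed
qed

lemma v_conv:
  assumes b: "0 < \<beta>" "\<beta> < 1" and m: "1 \<le> m"
  shows "(\<lambda>n. v \<beta> m n) \<longlonglongrightarrow> vinf \<beta> m"
proof -
  obtain B where "\<forall>n. v \<beta> m n \<le> B" using v_bounded[OF b m] by blast
  moreover have "incseq (\<lambda>n. v \<beta> m n)"
    using v_mono[of \<beta> m] b m by (intro incseq_SucI) auto
  ultimately obtain L where "(\<lambda>n. v \<beta> m n) \<longlonglongrightarrow> L" using incseq_convergent by blast
  then show ?thesis unfolding vinf_def by (metis limI)
qed

lemma vinf_one: assumes b: "0 < \<beta>" "\<beta> < 1" shows "vinf \<beta> 1 = 1 / (1 - \<beta>)"
proof -
  have "(\<lambda>k. \<beta> ^ k) sums (1 / (1 - \<beta>))" using b by (intro geometric_sums) simp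
  then have "(\<lambda>n. v \<beta> 1 n) \<longlonglongrightarrow> 1 / (1 - \<beta>)" unfolding v_one sums_def .
  then show ?thesis using v_conv[OF b, of 1] LIMSEQ_unique by auto
qed

lemma vinf_rec:
  assumes b: "0 < \<beta>" "\<beta> < 1" and m2: "2 \<le> m"
  shows "vinf \<beta> m = vinf \<beta> (m - 1) + \<beta> * (\<Sum>j=1..m-1. vinf \<beta> j * vinf \<beta> (m - j)) + \<beta> * vinf \<beta> m"
proof -
  have c: "\<And>j. 1 \<le> j \<Longrightarrow> (\<lambda>n. v \<beta> j n) \<longlonglongrightarrow> vinf \<beta> j" using v_conv[OF b] by blast
  have cs: "\<And>j. 1 \<le> j \<Longrightarrow> (\<lambda>n. v \<beta> j (Suc n)) \<longlonglongrightarrow> vinf \<beta> j"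
    using c by (rule LIMSEQ_Suc)
  have "(\<lambda>n. v \<beta> (m - 1) (Suc n) + \<beta> * (\<Sum>j=1..m-1. v \<beta> j n * v \<beta> (m - j) (Suc n))
                   + \<beta> * v \<beta> m n) \<longlonglongrightarrow> vinf \<beta> (m - 1) + \<beta> * (\<Sum>j=1..m-1. vinf \<beta> j * vinf \<beta> (m - j)) + \<beta> * vinf \<beta> m"
    using m2 by (intro tendsto_intros c cs) auto
  moreover have "(\<lambda>n. v \<beta> (m - 1) (Suc n) + \<beta> * (\<Sum>j=1..m-1. v \<beta> j n * v \<beta> (m - j) (Suc n))
                   + \<beta> * v \<beta> m n) = (\<lambda>n. v \<beta> m (Suc n))"
    using part_ii[OF m2] by (intro ext) simp
  ultimately show ?thesis using cs[of m] m2 LIMSEQ_unique by auto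
qed

lemma vinf_rec2:
  assumes b: "0 < \<beta>" "\<beta> < 1" and m2: "2 \<le> m"
  shows "vinf \<beta> m = vinf \<beta> (m - 1) / (1 - \<beta>)
                + \<beta> / (1 - \<beta>) * (\<Sum>j=1..m-1. vinf \<beta> j * vinf \<beta> (m - j))"
proof -
  have eq: "(1 - \<beta>) * vinf \<beta> m = vinf \<beta> (m - 1) + \<beta> * (\<Sum>j=1..m-1. vinf \<beta> j * vinf \<beta> (m - j))"
    using vinf_rec[OF assms] by (simp add: algebra_simps)
  have nz: "1 - \<beta> \<noteq> 0" using b by simp
  have "vinf \<beta> (m - 1) / (1 - \<beta>) + \<beta> / (1 - \<beta>) * (\<Sum>j=1..m-1. vinf \<beta> j * vinf \<beta> (m - j))
     = (vinf \<beta> (m - 1) + \<beta> * (\<Sum>j=1..m-1. vinf \<beta> j * vinf \<beta> (m - j))) / (1 - \<beta>)"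
    by (simp add: add_divide_distrib)
  also have "\<dots> = vinf \<beta> m" using eq nz by (simp add: divide_eq_eq mult.commute)
  finally show ?thesis by simp
qed

lemma vinf_nonneg: assumes b: "0 < \<beta>" "\<beta> < 1" and m: "1 \<le> m" shows "0 \<le> vinf \<beta> m"
  using v_conv[OF assms] b by (intro LIMSEQ_le_const[of _ _ 0]) (auto intro!: exI[of _ 0] v_nonneg)


lemma fe1: "(1::real fps) - fps_const b = fps_const (1-b)"
  by (metis fps_const_1_eq_1 fps_const_sub)
lemma fe2: "2 * (1 + fps_const (b::real)) = fps_const (2*(1+b))"
  by (metis fps_const_1_eq_1 fps_const_add fps_const_mult numeral_fps_const)
lemma PD2_gen: "2 * fps_X - 2 * (1 + fps_const (b::real)) = fps_const 2 * fps_X - fps_const (2*(1+b))"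
  by (subst fe2) (simp only: numeral_fps_const)

lemma P2_gen: "((1::real fps) - fps_const b)^2 - 2 * (1 + fps_const b) * fps_X + fps_X^2 = fps_const ((1-b)^2) - fps_const (2*(1+b)) * fps_X + fps_X^2"
  by (simp only: fe1 fe2 fps_const_power)

lemma lin_rec:
  fixes a :: "nat \<Rightarrow> real" and \<beta> :: real
  assumes bnz: "\<beta> \<noteq> 0"
    and a0: "(1 - \<beta>) * a 0 = 1"
    and rec: "\<And>m. (1 - \<beta>) * a (Suc m) = a m + \<beta> * (\<Sum>i=0..m. a i * a (m - i))"
  shows "(1 - \<beta>)^2 * (real k + 3) * a (k + 2) = (1 + \<beta>) * (2 * real k + 3) * a (k + 1) - real k * a k"
proof -
  define G where "G = Abs_fps a"
  define X where "X = (fps_X :: real fps)"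
  define c where "c = fps_const \<beta>"
  have Q: "(1 - c) * G = 1 + X * G + c * X * G^2"
  proof (rule fps_ext)
    fix n show "fps_nth ((1 - c) * G) n = fps_nth (1 + X * G + c * X * G^2) n"
    proof (cases n)
      case 0 then show ?thesis using a0 by (simp add: c_def G_def X_def algebra_simps)
    next
      case (Suc m)
      have "fps_nth ((1 - c) * G) n = (1 - \<beta>) * a (Suc m)" using Suc
        by (simp add: c_def G_def algebra_simps)
      moreover have "fps_nth (1 + X * G + c * X * G^2) n = a m + \<beta> * (\<Sum>i=0..m. a i * a (m - i))"
      proof -
        have "fps_nth (G * G) m = (\<Sum>i=0..m. a i * a (m - i))" by (simp add: G_def fps_mult_nth)
        then show ?thesis using Suc by (simp add: c_def X_def mult.assoc power2_eq_square, simp add: G_def)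
      qed
      ultimately show ?thesis using rec by simp
    qed
  qed
  define D where "D = (1 - c) - X - 2 * c * X * G"
  define P where "P = (1 - c)^2 - 2 * (1 + c) * X + X^2"
  have DP: "D^2 = P"
  proof -
    have "D^2 - P = - 4 * c * X * ((1 - c) * G - X * G - c * X * G^2 - 1)"
      unfolding D_def P_def by (simp add: algebra_simps power2_eq_square)
    also have "\<dots> = 0" using Q by simp
    finally show ?thesis by simp
  qed
  define DD where "DD = fps_deriv D"
  define PD where "PD = 2 * X - 2 * (1 + c)"
  have dn: "fps_nth D n = (if n = 0 then 1 - \<beta> else 0) - (if n = 1 then 1 else 0) - 2 * \<beta> * (if n = 0 then 0 else a (n - 1))" for n
    unfolding D_def c_def X_def G_def by (simp add: mult.assoc)
  have ddn: "fps_nth DD n = (real n + 1) * fps_nth D (n + 1)" for n unfolding DD_def by simp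
  have PD2: "PD = fps_const 2 * X - fps_const (2*(1+\<beta>))"
    unfolding PD_def X_def c_def by (rule PD2_gen)
  have P2: "P = fps_const ((1-\<beta>)^2) - fps_const (2*(1+\<beta>)) * X + X^2"
    unfolding P_def X_def c_def by (rule P2_gen)
  have PDe: "fps_deriv P = PD"
    unfolding P2 PD2 X_def by (rule fps_ext) (simp add: fps_deriv_nth)
  have L: "fps_nth (PD * D) (k+2) = 2 * fps_nth D (k+1) - 2 * (1 + \<beta>) * fps_nth D (k + 2)"
    unfolding PD2 X_def by (simp only: left_diff_distrib mult.assoc fps_sub_nth fps_mult_left_const_nth fps_X_mult_nth) simp
  have R: "fps_nth (2 * P * DD) (k+2) = 2 * ((1 - \<beta>)^2 * fps_nth DD (k+2) - 2 * (1 + \<beta>) * fps_nth DD (k+1) + fps_nth DD k)"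
    unfolding P2 X_def numeral_fps_const
    by (simp only: distrib_right left_diff_distrib mult.assoc fps_add_nth fps_sub_nth fps_mult_left_const_nth fps_X_mult_nth fps_X_power_mult_nth) simp
  have key: "PD * D = 2 * P * DD"
  proof -
    have "fps_deriv (D^2) = 2 * D * DD" unfolding DD_def by (simp add: power2_eq_square)
    then have "2 * D * DD = PD" using DP PDe by simp
    then have "PD * D = D * (2 * D * DD)" by simp
    also have "\<dots> = 2 * D^2 * DD" by (simp add: power2_eq_square algebra_simps)
    finally show ?thesis using DP by simp
  qed
  have eq: "2 * fps_nth D (k+1) - 2 * (1 + \<beta>) * fps_nth D (k + 2) =
     2 * ((1 - \<beta>)^2 * fps_nth DD (k+2) - 2 * (1 + \<beta>) * fps_nth DD (k+1) + fps_nth DD k)"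
    using L R key by simp
  have d1: "real k * fps_nth D (k+1) = real k * (-2 * \<beta> * a k)" by (cases k) (simp_all add: dn)
  have d2: "fps_nth D (k+2) = -2 * \<beta> * a (k+1)" by (simp add: dn)
  have d3: "fps_nth D (k+3) = -2 * \<beta> * a (k+2)" by (simp add: dn)
  have e2: "fps_nth DD (k+2) = (real k + 3) * fps_nth D (k+3)" unfolding ddn by (simp add: numeral_eq_Suc)
  have e1: "fps_nth DD (k+1) = (real k + 2) * fps_nth D (k+2)" unfolding ddn by (simp add: numeral_eq_Suc)
  have e0: "fps_nth DD k = (real k + 1) * fps_nth D (k+1)" unfolding ddn by simp
  have "(1 - \<beta>)^2 * (real k + 3) * fps_nth D (k+3) = (1 + \<beta>) * (2 * real k + 3) * fps_nth D (k+2) - real k * fps_nth D (k+1)"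
    using eq unfolding e0 e1 e2 by (simp add: algebra_simps)
  then have "(-2 * \<beta>) * ((1 - \<beta>)^2 * (real k + 3) * a (k + 2)) = (-2 * \<beta>) * ((1 + \<beta>) * (2 * real k + 3) * a (k + 1) - real k * a k)"
    unfolding d1 d2 d3 by (simp add: algebra_simps)
  then show ?thesis using bnz by simp
qed


definition NA :: "nat \<Rightarrow> nat \<Rightarrow> real" where
  "NA m j = real (m choose j) * real (m choose Suc j) / real m"

lemma absorb_comp_real:
  assumes "k \<le> n" shows "(real n - real k) * real (n choose k) = real n * real ((n-1) choose k)"
proof -
  have "real ((n - k) * (n choose k)) = real (n * ((n - 1) choose k))"
    using binomial_absorb_comp[of n k] by (simp only:)
  then show ?thesis using assms by (simp add: of_nat_diff)
qed

lemma absorption_real: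
  "(real k + 1) * real (n choose Suc k) = real n * real ((n-1) choose k)"
proof -
  have "real (Suc k * (n choose Suc k)) = real (n * ((n - 1) choose k))"
    using binomial_absorption[of k n] by (simp only:)
  then show ?thesis by (simp add: algebra_simps)
qed

lemma nar_pt:
  assumes n3: "3 \<le> n"
  shows "(real n + 1) * NA n j = (2 * real n - 1) * (NA (n-1) j + (if j = 0 then 0 else NA (n-1) (j-1)))
     - (real n - 2) * (NA (n-2) j - 2 * (if j = 0 then 0 else NA (n-2) (j-1)) + (if j < 2 then 0 else NA (n-2) (j-2)))"
proof (cases "j < n")
  case False
  then show ?thesis unfolding NA_def by (auto simp: binomial_eq_0)
next
  case True
  define N where "N = real n"
  define J where "J = real j"
  define B where "B = real (n choose j)"
  define B' where "B' = real (n choose Suc j)"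
  define c0 where "c0 = real ((n-1) choose j)"
  define c1 where "c1 = real ((n-1) choose Suc j)"
  define d0 where "d0 = real ((n-2) choose j)"
  define d1 where "d1 = real ((n-2) choose Suc j)"
  have N3: "N \<ge> 3" using n3 unfolding N_def by simp
  have JN: "J + 1 \<le> N" using True unfolding N_def J_def by simp
  have nn: "n - 1 - 1 = n - 2" by simp
  have nm1: "real (n - 1) = N - 1" "real (n - 2) = N - 2" using n3 unfolding N_def by (simp_all add: of_nat_diff)
  have f1: "(N - J) * B = N * c0"
    using absorb_comp_real[of j n] True unfolding N_def J_def B_def c0_def by simp
  have f2: "(J + 1) * B' = N * c0"
    using absorption_real[of j n] unfolding N_def J_def B'_def c0_def by simp
  have f3: "(N - J - 1) * B' = N * c1"
    using absorb_comp_real[of "Suc j" n] True unfolding N_def J_def B'_def c1_def by (simp add: algebra_simps)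
  have g1: "(N - 1 - J) * c0 = (N - 1) * d0"
    using absorb_comp_real[of j "n-1"] True nm1 unfolding J_def c0_def d0_def nn by simp
  have g2: "(N - 2 - J) * c1 = (N - 1) * d1"
  proof (cases "Suc j < n")
    case True
    then show ?thesis
      using absorb_comp_real[of "Suc j" "n-1"] nm1 unfolding J_def c1_def d1_def nn by (simp add: algebra_simps)
  next
    case False
    then have "c1 = 0" "d1 = 0" unfolding c1_def d1_def by (auto simp: binomial_eq_0)
    then show ?thesis by simp
  qed
  define T2 where "T2 = (if j = 0 then 0 else NA (n-1) (j-1))"
  define T4 where "T4 = (if j = 0 then 0 else NA (n-2) (j-1))"
  define T5 where "T5 = (if j < 2 then 0 else NA (n-2) (j-2))"
  have T2e: "T2 = (J * B / N) * c0 / (N - 1)"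
  proof (cases j)
    case 0 then show ?thesis unfolding T2_def J_def by simp
  next
    case (Suc i)
    have "J * B = N * real ((n-1) choose i)"
      using absorption_real[of i n] Suc unfolding N_def J_def B_def by (simp add: ac_simps)
    then have "real ((n-1) choose i) = J * B / N" using N3 by (simp add: field_simps)
    then show ?thesis unfolding T2_def NA_def using Suc nm1 by (simp add: c0_def)
  qed
  have T4e: "T4 = (J * c0 / (N - 1)) * d0 / (N - 2)"
  proof (cases j)
    case 0 then show ?thesis unfolding T4_def J_def by simp
  next
    case (Suc i)
    have "J * c0 = (N - 1) * real ((n-2) choose i)"
      using absorption_real[of i "n-1"] Suc nm1 unfolding J_def c0_def nn by (simp add: ac_simps N_def)
    then have "real ((n-2) choose i) = J * c0 / (N - 1)" using N3 by (simp add: field_simps)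
    then show ?thesis unfolding T4_def NA_def using Suc nm1 by (simp add: d0_def)
  qed
  have T5e: "T5 = ((J - 1) * (J * B / N) / (N - 1)) * (J * c0 / (N - 1)) / (N - 2)"
  proof (cases "j < 2")
    case True
    then have "j = 0 \<or> j = 1" by auto
    then show ?thesis unfolding T5_def J_def using True by auto
  next
    case False
    then obtain i where i: "j = Suc (Suc i)" using less_2_cases_iff not_less by (cases j; cases "j - 1") auto
    have e1: "J * B = N * real ((n-1) choose Suc i)"
      using absorption_real[of "Suc i" n] i unfolding N_def J_def B_def by (simp add: ac_simps)
    have e2: "(J - 1) * real ((n-1) choose Suc i) = (N - 1) * real ((n-2) choose i)"
      using absorption_real[of i "n-1"] i nm1 unfolding J_def nn by (simp add: ac_simps N_def)
    have e3: "J * c0 = (N - 1) * real ((n-2) choose Suc i)"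
      using absorption_real[of "Suc i" "n-1"] i nm1 unfolding J_def c0_def nn by (simp add: ac_simps N_def)
    have x: "real ((n-1) choose Suc i) = J * B / N" using e1 N3 by (simp add: field_simps)
    have y: "real ((n-2) choose i) = (J - 1) * real ((n-1) choose Suc i) / (N - 1)"
      using e2 N3 by (simp add: field_simps)
    have "real ((n-2) choose i) = (J - 1) * (J * B / N) / (N - 1)"
      using y unfolding x .
    moreover have "real ((n-2) choose Suc i) = J * c0 / (N - 1)" using e3 N3 by (simp add: field_simps)
    ultimately show ?thesis unfolding T5_def NA_def using i nm1 by simp
  qed
  have A0: "NA n j = B * B' / N" unfolding NA_def B_def B'_def N_def by simp
  have A1: "NA (n-1) j = c0 * c1 / (N - 1)" unfolding NA_def c0_def c1_def using nm1 by simp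
  have A2: "NA (n-2) j = d0 * d1 / (N - 2)" unfolding NA_def d0_def d1_def using nm1 by simp
  have c0e: "c0 = (N - J) * B / N" using f1 N3 by (simp add: field_simps)
  have J1: "J + 1 \<noteq> 0" "1 + J \<noteq> 0" unfolding J_def by simp_all
  have B'e: "B' = N * c0 / (J + 1)" using f2 J1 by (simp add: field_simps)
  have c1e: "c1 = (N - J - 1) * B' / N" using f3 N3 by (simp add: field_simps)
  have d0e: "d0 = (N - 1 - J) * c0 / (N - 1)" using g1 N3 by (simp add: field_simps)
  have d1e: "d1 = (N - 2 - J) * c1 / (N - 1)" using g2 N3 by (simp add: field_simps)
  have nz: "N \<noteq> 0" "N - 1 \<noteq> 0" "N - 2 \<noteq> 0" "J + 1 \<noteq> 0" using N3 J1 by auto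
  define u where "u = inverse N"
  define v where "v = inverse (N - 1)"
  define w where "w = inverse (J + 1)"
  define z where "z = inverse (N - 2)"
  have hu: "N * u = 1" and hv: "(N - 1) * v = 1" and hw: "(J + 1) * w = 1" and hz: "(N - 2) * z = 1"
    using nz unfolding u_def v_def w_def z_def by auto
  have "(N + 1) * NA n j = (2 * N - 1) * (NA (n-1) j + T2) - (N - 2) * (NA (n-2) j - 2 * T4 + T5)"
    unfolding A0 A1 A2 T2e T4e T5e d0e d1e c1e B'e c0e divide_inverse
      u_def[symmetric] v_def[symmetric] w_def[symmetric] z_def[symmetric]
    using hu hv hw hz by algebra
  then show ?thesis unfolding T2_def T4_def T5_def N_def by simp
qed


lemma nar_repr:
  assumes "m \<le> Suc M"
  shows "narayana m \<beta> = (\<Sum>j\<le>M. NA m j * \<beta> ^ j)"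
proof -
  have "narayana m \<beta> = (\<Sum>j<m. NA m j * \<beta> ^ j)"
    unfolding narayana_def
  proof (rule sum.reindex_bij_witness[of _ "\<lambda>j. m - j" "\<lambda>k. m - k"])
    fix k assume k: "k \<in> {1..m}"
    then have s1: "m choose (m - k) = m choose k" by (simp add: binomial_symmetric[symmetric])
    have q: "Suc (m - k) = m - (k - 1)" using k by auto
    have "m choose (k - 1) = m choose (m - (k - 1))" by (rule binomial_symmetric) (use k in auto)
    then have s2: "m choose Suc (m - k) = m choose (k - 1)" unfolding q by simp
    show "NA m (m - k) * \<beta> ^ (m - k) = 1 / real m * real (m choose k) * real (m choose (k - 1)) * \<beta> ^ (m - k)"
      unfolding NA_def s1 s2 by simp
  qed auto
  also have "\<dots> = (\<Sum>j\<le>M. NA m j * \<beta> ^ j)"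
  proof (rule sum.mono_neutral_left)
    show "\<forall>i\<in>{..M} - {..<m}. NA m i * \<beta> ^ i = 0"
      by (auto simp: NA_def binomial_eq_0)
  qed (use assms in auto)
  finally show ?thesis .
qed

lemma shift_sum:
  "\<beta> * (\<Sum>j\<le>M. f j * \<beta> ^ j) = (\<Sum>j\<le>Suc M. (if j = 0 then 0 else f (j - 1)) * (\<beta>::real) ^ j)"
  by (simp add: sum.atMost_Suc_shift sum_distrib_left mult_ac del: sum.atMost_Suc)

lemma nar_rec:
  "(real k + 3) * narayana (k + 2) \<beta> = (1 + \<beta>) * (2 * real k + 3) * narayana (k + 1) \<beta>
      - real k * (1 - \<beta>)^2 * narayana k \<beta>"
proof (cases k)
  case 0
  have s12: "{1..2::nat} = {1, 2}" by auto
  have "narayana 2 \<beta> = 1 + \<beta>" unfolding narayana_def s12 by simp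
  moreover have "narayana 1 \<beta> = 1" unfolding narayana_def by simp
  ultimately show ?thesis using 0 by (simp add: algebra_simps numeral_2_eq_2)
next
  case (Suc i)
  define n where "n = k + 2"
  have n3: "3 \<le> n" unfolding n_def using Suc by simp
  define S where "S f = (\<Sum>j\<le>n. f j * \<beta> ^ j)" for f
  define T2 where "T2 j = (if j = 0 then 0 else NA (n-1) (j-1))" for j
  define T4 where "T4 j = (if j = 0 then 0 else NA (n-2) (j-1))" for j
  define T5 where "T5 j = (if j < 2 then 0 else NA (n-2) (j-2))" for j
  have e0: "narayana n \<beta> = S (NA n)" unfolding S_def by (rule nar_repr) simp
  have e1: "narayana (n-1) \<beta> = S (NA (n-1))" unfolding S_def by (rule nar_repr) simp
  have e2: "narayana (n-2) \<beta> = S (NA (n-2))" unfolding S_def by (rule nar_repr) simp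
  have nn: "Suc (n - 1) = n" "Suc (n - 2) = n - 1" using n3 by auto
  have r1: "narayana (n-1) \<beta> = (\<Sum>j\<le>n-1. NA (n-1) j * \<beta> ^ j)" by (rule nar_repr) simp
  have r2: "narayana (n-2) \<beta> = (\<Sum>j\<le>n-1. NA (n-2) j * \<beta> ^ j)" by (rule nar_repr) simp
  have e1b: "\<beta> * narayana (n-1) \<beta> = S T2"
    unfolding r1 shift_sum S_def T2_def nn by simp
  have e2b: "\<beta> * narayana (n-2) \<beta> = S T4"
    unfolding r2 shift_sum S_def T4_def nn using n3 by simp
  have e2c: "\<beta>^2 * narayana (n-2) \<beta> = S T5"
  proof -
    have "\<beta>^2 * narayana (n-2) \<beta> = \<beta> * (\<beta> * (\<Sum>j\<le>n-2. NA (n-2) j * \<beta> ^ j))"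
      using nar_repr[of "n-2" "n-2" \<beta>, OF le_SucI[OF order_refl]] by (simp only: power2_eq_square mult.assoc)
    also have "\<dots> = S (\<lambda>j. if j = 0 then 0 else (if j - 1 = 0 then 0 else NA (n-2) (j - 1 - 1)))"
      unfolding shift_sum nn S_def by simp
    also have "\<dots> = S T5" unfolding S_def T5_def
      by (intro sum.cong refl) (simp add: numeral_2_eq_2)
    finally show ?thesis .
  qed
  have "(real n + 1) * narayana n \<beta> = S (\<lambda>j. (real n + 1) * NA n j)"
    unfolding e0 S_def by (simp add: sum_distrib_left mult.assoc)
  also have "\<dots> = S (\<lambda>j. (2 * real n - 1) * (NA (n-1) j + T2 j) - (real n - 2) * (NA (n-2) j - 2 * T4 j + T5 j))"
    unfolding S_def T2_def T4_def T5_def using nar_pt[OF n3] by simp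
  also have "\<dots> = (2 * real n - 1) * (S (NA (n-1)) + S T2) - (real n - 2) * (S (NA (n-2)) - 2 * S T4 + S T5)"
    unfolding S_def by (simp add: algebra_simps sum.distrib sum_subtractf sum_distrib_left)
  also have "\<dots> = (1 + \<beta>) * (2 * real n - 1) * narayana (n - 1) \<beta> - (real n - 2) * (1 - \<beta>)^2 * narayana (n - 2) \<beta>"
    unfolding e1[symmetric] e1b[symmetric] e2[symmetric] e2b[symmetric] e2c[symmetric]
    by (simp add: algebra_simps power2_eq_square)
  finally show ?thesis unfolding n_def by (simp add: algebra_simps)
qed


lemma a_rec:
  assumes b: "0 < \<beta>" "\<beta> < 1"
  shows "(1 - \<beta>) * vinf \<beta> (Suc (Suc m)) = vinf \<beta> (Suc m) + \<beta> * (\<Sum>i=0..m. vinf \<beta> (Suc i) * vinf \<beta> (Suc (m - i)))"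
proof -
  have r: "vinf \<beta> (Suc (Suc m)) = vinf \<beta> (Suc m) + \<beta> * (\<Sum>j=Suc 0..Suc m. vinf \<beta> j * vinf \<beta> (Suc (Suc m) - j)) + \<beta> * vinf \<beta> (Suc (Suc m))"
    using vinf_rec[OF b, of "Suc (Suc m)"] by simp
  have "(\<Sum>j=Suc 0..Suc m. vinf \<beta> j * vinf \<beta> (Suc (Suc m) - j)) = (\<Sum>i=0..m. vinf \<beta> (Suc i) * vinf \<beta> (Suc (Suc m) - Suc i))"
    by (rule sum.shift_bounds_cl_Suc_ivl)
  also have "\<dots> = (\<Sum>i=0..m. vinf \<beta> (Suc i) * vinf \<beta> (Suc (m - i)))"
    by (intro sum.cong refl) (simp add: Suc_diff_le)
  finally show ?thesis using r by (simp add: algebra_simps)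
qed

lemma vinf_nar:
  assumes b: "0 < \<beta>" "\<beta> < 1" and m1: "1 \<le> m"
  shows "vinf \<beta> (m + 1) = narayana m \<beta> / (1 - \<beta>) ^ (2 * m + 1)"
proof -
  define a where "a i = vinf \<beta> (Suc i)" for i
  have a0: "(1 - \<beta>) * a 0 = 1" unfolding a_def using vinf_one[OF b] b by simp
  have rec: "(1 - \<beta>) * a (Suc i) = a i + \<beta> * (\<Sum>j=0..i. a j * a (i - j))" for i
    unfolding a_def using a_rec[OF b, of i] by simp
  have lr: "(1 - \<beta>)^2 * (real k + 3) * a (k + 2) = (1 + \<beta>) * (2 * real k + 3) * a (k + 1) - real k * a k" for k
    using lin_rec[of \<beta> a k, OF _ a0 rec] b by simp
  define e where "e i = a i * (1 - \<beta>) ^ (2 * i + 1)" for i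
  have main: "e m = narayana m \<beta>" if "1 \<le> m" for m
    using that
  proof (induction m rule: less_induct)
    case (less m)
    show ?case
    proof (cases "m = 1")
      case True
      have "(1 - \<beta>) * a 1 = a 0 + \<beta> * (a 0 * a 0)" using rec[of 0] by simp
      then have "a 1 * (1 - \<beta>)^3 = (a 0 + \<beta> * (a 0 * a 0)) * ((1 - \<beta>) * (1 - \<beta>))"
        by (simp add: power3_eq_cube mult.assoc[symmetric]) (simp add: algebra_simps)
      also have "\<dots> = ((1 - \<beta>) * a 0) * (1 - \<beta>) + \<beta> * (((1 - \<beta>) * a 0) * ((1 - \<beta>) * a 0))"
        by (simp add: algebra_simps)
      also have "\<dots> = 1" unfolding a0 by simp
      finally have "a 1 * (1 - \<beta>)^3 = 1" .
      moreover have "narayana 1 \<beta> = 1" unfolding narayana_def by simp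
      ultimately show ?thesis unfolding e_def True by simp
    next
      case False
      define k where "k = m - 2"
      have k: "m = k + 2" using False less.prems unfolding k_def by arith
      have IH1: "e (k + 1) = narayana (k + 1) \<beta>" using less.IH[of "k+1"] k by simp
      have IH0: "real k * e k = real k * narayana k \<beta>"
        using less.IH[of k] k by (cases k) auto
      define q where "q = (1 - \<beta>) ^ (2 * k + 1)"
      have ek2: "e (k + 2) = a (k + 2) * (1 - \<beta>)^2 * (1 - \<beta>)^2 * q"
      proof -
        have x: "2 * (k + 2) + 1 = 2 + (2 + (2 * k + 1))" by simp
        show ?thesis unfolding e_def q_def x power_add by (simp only: mult.assoc)
      qed
      have ek1: "e (k + 1) = a (k + 1) * (1 - \<beta>)^2 * q"
      proof -
        have x: "2 * (k + 1) + 1 = 2 + (2 * k + 1)" by simp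
        show ?thesis unfolding e_def q_def x power_add by (simp only: mult.assoc)
      qed
      have ek: "e k = a k * q" unfolding e_def q_def by simp
      have "(real k + 3) * e (k + 2) = (1 + \<beta>) * (2 * real k + 3) * e (k + 1) - real k * (1 - \<beta>)^2 * e k"
      proof -
        have "(real k + 3) * e (k + 2) = ((1 - \<beta>)^2 * (real k + 3) * a (k + 2)) * (1 - \<beta>)^2 * q"
          unfolding ek2 by (simp add: algebra_simps)
        also have "\<dots> = ((1 + \<beta>) * (2 * real k + 3) * a (k + 1) - real k * a k) * (1 - \<beta>)^2 * q"
          unfolding lr ..
        also have "\<dots> = (1 + \<beta>) * (2 * real k + 3) * e (k + 1) - real k * (1 - \<beta>)^2 * e k"
          unfolding ek1 ek by (simp add: algebra_simps)
        finally show ?thesis .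
      qed
      also have "\<dots> = (real k + 3) * narayana (k + 2) \<beta>"
      proof -
        have "(1 - \<beta>)^2 * (real k * e k) = (1 - \<beta>)^2 * (real k * narayana k \<beta>)" using IH0 by (rule arg_cong)
        then have IH0': "real k * (1 - \<beta>)^2 * e k = real k * (1 - \<beta>)^2 * narayana k \<beta>" by (simp only: ac_simps)
        show ?thesis unfolding IH1 IH0' by (rule nar_rec[symmetric])
      qed
      finally have "(real k + 3) * e (k + 2) = (real k + 3) * narayana (k + 2) \<beta>" .
      then show ?thesis unfolding k by simp
    qed
  qed
  have "vinf \<beta> (m + 1) = e m / (1 - \<beta>) ^ (2 * m + 1)"
    unfolding e_def a_def using b by simp
  then show ?thesis using main[OF m1] by simp
qed


lemma gen_fun:
  fixes a :: "nat \<Rightarrow> real" and \<beta> :: real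
  assumes b: "0 < \<beta>" "\<beta> < 1"
    and a0: "(1 - \<beta>) * a 0 = 1"
    and rec: "\<And>m. (1 - \<beta>) * a (Suc m) = a m + \<beta> * (\<Sum>i=0..m. a i * a (m - i))"
    and bnd: "\<And>m. \<bar>a m\<bar> \<le> (1 / (1 - \<beta>)) * (4 / (1 - \<beta>)^2) ^ m"
  shows "\<exists>r>0. (\<forall>x. \<bar>x\<bar> < r \<longrightarrow> summable (\<lambda>m. a m * x ^ m)) \<and>
        (\<forall>x. 0 < \<bar>x\<bar> \<and> \<bar>x\<bar> < r \<longrightarrow>
           (\<lambda>m. a m * x ^ m) sums
             ((1 - \<beta> - x - sqrt ((1 - \<beta> - x)\<^sup>2 - 4 * \<beta> * x)) / (2 * \<beta> * x)))"
proof -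
  define t where "t = 1 - \<beta>"
  have t0: "0 < t" "t < 1" using b unfolding t_def by auto
  define K where "K = 1 / t"
  define c where "c = 4 / t^2"
  define r where "r = t^2 / 8"
  have r0: "0 < r" using t0 unfolding r_def by simp
  have K0: "0 < K" using t0 unfolding K_def by simp
  have key: "summable (\<lambda>m. norm (a m * x ^ m)) \<and> \<bar>suminf (\<lambda>m. a m * x ^ m)\<bar> \<le> 2 * K" if x: "\<bar>x\<bar> < r" for x
  proof -
    define q where "q = c * \<bar>x\<bar>"
    have q0: "0 \<le> q" unfolding q_def c_def by simp
    have q1: "q \<le> 1 / 2"
    proof -
      have "q = 4 * \<bar>x\<bar> / t^2" unfolding q_def c_def by simp
      also have "\<dots> \<le> 4 * r / t^2" using x t0 by (intro divide_right_mono) auto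
      also have "\<dots> = 1 / 2" unfolding r_def using t0 by simp
      finally show ?thesis .
    qed
    have nb: "norm (a m * x ^ m) \<le> K * q ^ m" for m
    proof -
      have "norm (a m * x ^ m) = \<bar>a m\<bar> * \<bar>x\<bar> ^ m" by (simp add: abs_mult power_abs)
      also have "\<dots> \<le> (K * c ^ m) * \<bar>x\<bar> ^ m"
        using bnd[of m] unfolding K_def c_def t_def by (intro mult_right_mono) auto
      also have "\<dots> = K * q ^ m" unfolding q_def by (simp add: power_mult_distrib)
      finally show ?thesis .
    qed
    have gs: "(\<lambda>m. K * q ^ m) sums (K * (1 / (1 - q)))"
    proof -
      have "norm q < 1" using q0 q1 by simp
      then show ?thesis by (rule sums_mult[OF geometric_sums])
    qed
    have sn: "summable (\<lambda>m. norm (a m * x ^ m))"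
    proof (rule summable_comparison_test'[OF sums_summable[OF gs]])
      fix m :: nat show "norm (norm (a m * x ^ m)) \<le> K * q ^ m" using nb[of m] by simp
    qed
    have "\<bar>suminf (\<lambda>m. a m * x ^ m)\<bar> \<le> (\<Sum>m. norm (a m * x ^ m))"
      using summable_norm[OF sn] by simp
    also have "\<dots> \<le> (\<Sum>m. K * q ^ m)"
      using nb sn gs by (intro suminf_le) (auto simp: sums_iff)
    also have "\<dots> = K * (1 / (1 - q))" using gs by (simp add: sums_iff)
    also have "\<dots> \<le> K * 2" using q0 q1 K0 by (intro mult_left_mono) (auto simp: field_simps)
    finally show ?thesis using sn by simp
  qed
  have quad: "(1 - \<beta>) * G = 1 + x * G + \<beta> * x * G^2"
    if x: "\<bar>x\<bar> < r" and G: "G = suminf (\<lambda>m. a m * x ^ m)" for x G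
  proof -
    define f where "f m = a m * x ^ m" for m
    have sn: "summable (\<lambda>m. norm (f m))" using key[OF x] unfolding f_def by simp
    have fs: "f sums G" using G summable_norm_cancel[OF sn] unfolding f_def by (simp add: sums_iff)
    have cp: "(\<lambda>k. \<Sum>i\<le>k. f i * f (k - i)) sums (G * G)"
      using Cauchy_product_sums[OF sn sn] fs by (simp add: sums_iff)
    have ct: "(\<Sum>i\<le>k. f i * f (k - i)) = x ^ k * (\<Sum>i=0..k. a i * a (k - i))" for k
      unfolding f_def atMost_atLeast0 sum_distrib_left
      by (intro sum.cong refl) (simp add: power_add[symmetric] algebra_simps)
    have "(\<lambda>m. x * f m + \<beta> * x * (\<Sum>i\<le>m. f i * f (m - i))) sums (x * G + \<beta> * x * (G * G))"
      by (intro sums_add sums_mult fs cp)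
    moreover have "(\<lambda>m. x * f m + \<beta> * x * (\<Sum>i\<le>m. f i * f (m - i))) = (\<lambda>m. (1 - \<beta>) * f (Suc m))"
    proof
      fix m
      have "(1 - \<beta>) * f (Suc m) = x * x ^ m * ((1 - \<beta>) * a (Suc m))" unfolding f_def by (simp add: algebra_simps)
      also have "\<dots> = x * x ^ m * (a m + \<beta> * (\<Sum>i=0..m. a i * a (m - i)))" unfolding rec ..
      finally show "x * f m + \<beta> * x * (\<Sum>i\<le>m. f i * f (m - i)) = (1 - \<beta>) * f (Suc m)"
        unfolding ct by (simp add: f_def algebra_simps)
    qed
    ultimately have "(\<lambda>m. (1 - \<beta>) * f (Suc m)) sums (x * G + \<beta> * x * (G * G))" by simp
    then have "(\<lambda>m. (1 - \<beta>) * f m) sums (x * G + \<beta> * x * (G * G) + (1 - \<beta>) * f 0)"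
      using sums_Suc_iff[of "\<lambda>m. (1 - \<beta>) * f m"] by simp
    moreover have "(\<lambda>m. (1 - \<beta>) * f m) sums ((1 - \<beta>) * G)" using fs by (rule sums_mult)
    ultimately have "(1 - \<beta>) * G = x * G + \<beta> * x * (G * G) + (1 - \<beta>) * f 0" using sums_unique2 by blast
    then show ?thesis using a0 unfolding f_def by (simp add: power2_eq_square algebra_simps)
  qed
  show ?thesis
  proof (intro exI[of _ r] conjI allI impI r0)
    fix x :: real assume xr: "\<bar>x\<bar> < r"
    have "summable (\<lambda>m. norm (a m * x ^ m))" using key[OF xr] by simp
    then show "summable (\<lambda>m. a m * x ^ m)" by (rule summable_norm_cancel)
  next
    fix x :: real assume x: "0 < \<bar>x\<bar> \<and> \<bar>x\<bar> < r"
    define G where "G = suminf (\<lambda>m. a m * x ^ m)"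
    have xr: "\<bar>x\<bar> < r" using x by simp
    have Q: "(1 - \<beta>) * G = 1 + x * G + \<beta> * x * G^2" using quad[OF xr G_def] .
    have Gb: "\<bar>G\<bar> \<le> 2 * K" using key[OF xr] unfolding G_def by simp
    define D where "D = 1 - \<beta> - x - 2 * \<beta> * x * G"
    have DP: "D^2 = (1 - \<beta> - x)\<^sup>2 - 4 * \<beta> * x"
    proof -
      have "D^2 - ((1 - \<beta> - x)\<^sup>2 - 4 * \<beta> * x) = 4 * \<beta> * x * (1 + x * G + \<beta> * x * G^2 - (1 - \<beta>) * G)"
        unfolding D_def by (simp add: power2_eq_square algebra_simps)
      then show ?thesis using Q by simp
    qed
    have Dpos: "0 < D"
    proof -
      have "\<bar>2 * \<beta> * x * G\<bar> = 2 * \<beta> * \<bar>x\<bar> * \<bar>G\<bar>" using b by (simp add: abs_mult)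
      also have "\<dots> \<le> 2 * \<beta> * \<bar>x\<bar> * (2 * K)" using Gb b by (intro mult_left_mono) auto
      also have "\<dots> \<le> 4 * \<bar>x\<bar> / t"
      proof -
        have "\<beta> * \<bar>x\<bar> \<le> \<bar>x\<bar>" using b by (intro mult_left_le_one_le) auto
        then show ?thesis unfolding K_def using b t0 by (simp add: field_simps)
      qed
      finally have h: "\<bar>2 * \<beta> * x * G\<bar> \<le> 4 * \<bar>x\<bar> / t" .
      have "\<bar>x\<bar> * (t + 4) < t * t"
      proof -
        have "\<bar>x\<bar> * (t + 4) \<le> r * (t + 4)" using xr t0 by (intro mult_right_mono) auto
        also have "\<dots> < t * t" unfolding r_def using t0 by (simp add: field_simps power2_eq_square)
        finally show ?thesis .
      qed
      then have "\<bar>x\<bar> + 4 * \<bar>x\<bar> / t < t" using t0 by (simp add: field_simps)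
      then show ?thesis unfolding D_def t_def using h by (auto simp: abs_le_iff t_def)
    qed
    have sq: "sqrt ((1 - \<beta> - x)\<^sup>2 - 4 * \<beta> * x) = D"
      unfolding DP[symmetric] using Dpos by simp
    have "G = (1 - \<beta> - x - sqrt ((1 - \<beta> - x)\<^sup>2 - 4 * \<beta> * x)) / (2 * \<beta> * x)"
      unfolding sq D_def using x b by (simp add: field_simps)
    moreover have "(\<lambda>m. a m * x ^ m) sums G"
    proof -
      have "summable (\<lambda>m. norm (a m * x ^ m))" using key[OF xr] by simp
      then have "summable (\<lambda>m. a m * x ^ m)" by (rule summable_norm_cancel)
      then show ?thesis unfolding G_def by (rule summable_sums)
    qed
    ultimately show "(\<lambda>m. a m * x ^ m) sums ((1 - \<beta> - x - sqrt ((1 - \<beta> - x)\<^sup>2 - 4 * \<beta> * x)) / (2 * \<beta> * x))"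
      by simp
  qed
qed


lemma nar_le: assumes "0 \<le> \<beta>" "\<beta> \<le> 1" shows "narayana m \<beta> \<le> 4 ^ m"
proof (cases "m = 0")
  case True then show ?thesis by (simp add: narayana_def)
next
  case False
  have "narayana m \<beta> \<le> of_nat (card {1..m}) * (1 / real m * 4 ^ m)"
    unfolding narayana_def
  proof (rule sum_bounded_above)
    fix k assume "k \<in> {1..m}"
    have c1: "real (m choose k) \<le> 2 ^ m" using binomial_le_pow2[of m k] by (metis of_nat_le_iff of_nat_numeral of_nat_power)
    have c2: "real (m choose (k - 1)) \<le> 2 ^ m" using binomial_le_pow2[of m "k - 1"] by (metis of_nat_le_iff of_nat_numeral of_nat_power)
    have c3: "\<beta> ^ (m - k) \<le> 1" using assms by (simp add: power_le_one)
    have "real (m choose k) * real (m choose (k - 1)) * \<beta> ^ (m - k) \<le> 2 ^ m * 2 ^ m * 1"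
      using c1 c2 c3 assms by (intro mult_mono) auto
    also have "\<dots> = 4 ^ m" by (simp add: power_mult_distrib[symmetric])
    finally show "1 / real m * real (m choose k) * real (m choose (k - 1)) * \<beta> ^ (m - k) \<le> 1 / real m * 4 ^ m"
      using False by (simp add: divide_right_mono mult.assoc)
  qed
  also have "\<dots> = 4 ^ m" using False by simp
  finally show ?thesis .
qed

lemma vinf_bound:
  assumes b: "0 < \<beta>" "\<beta> < 1"
  shows "\<bar>vinf \<beta> (m + 1)\<bar> \<le> (1 / (1 - \<beta>)) * (4 / (1 - \<beta>)^2) ^ m"
proof (cases "m = 0")
  case True then show ?thesis using vinf_one[OF b] b by simp
next
  case False
  have nn: "0 \<le> vinf \<beta> (m + 1)" using vinf_nonneg[OF b] by simp
  have "vinf \<beta> (m + 1) = narayana m \<beta> / (1 - \<beta>) ^ (2 * m + 1)" using vinf_nar[OF b] False by simp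
  also have "\<dots> \<le> 4 ^ m / (1 - \<beta>) ^ (2 * m + 1)"
    using nar_le[of \<beta> m] b by (intro divide_right_mono) auto
  also have "\<dots> = (1 / (1 - \<beta>)) * (4 / (1 - \<beta>)^2) ^ m"
    by (simp add: power_divide power_mult[symmetric] power_add field_simps)
  finally show ?thesis using nn by simp
qed

theorem mainTheorem10:
  fixes \<beta> :: real
  assumes beta: "0 < \<beta>" "\<beta> < 1"
  shows
    \<comment> \<open>(i) full-batch chain terms\<close>
    "(\<forall>(D :: nat \<Rightarrow> nat \<Rightarrow> 'a::real_vector list \<Rightarrow> 'a).
        multilinear_family D \<longrightarrow> (\<forall>s. D s = D 0) \<longrightarrow>
        (\<forall>m l n. 1 \<le> m \<longrightarrow> 1 \<le> l \<longrightarrow>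
            E \<beta> D (chain m) l n = vv \<beta> m l n *\<^sub>R (((\<lambda>x. D 0 2 [x]) ^^ (m - 1)) (D 0 1 [])))
        \<and> (\<forall>m n. 2 \<le> m \<longrightarrow>
            - \<beta> *\<^sub>R E \<beta> D (chain m) 1 n = (- \<beta> * v \<beta> m n) *\<^sub>R (((\<lambda>x. D 0 2 [x]) ^^ (m - 1)) (D 0 1 []))))
     \<and> \<comment> \<open>(ii)\<close>
     (\<forall>m n. 2 \<le> m \<longrightarrow> 1 \<le> n \<longrightarrow>
        v \<beta> m n = v \<beta> (m - 1) n + \<beta> * (\<Sum>j=1..m-1. v \<beta> j (n - 1) * v \<beta> (m - j) n)
                   + \<beta> * v \<beta> m (n - 1))
     \<and> \<comment> \<open>(iii)\<close>
     (\<forall>m\<ge>1. convergent (\<lambda>n. v \<beta> m n))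
     \<and> vinf \<beta> 1 = 1 / (1 - \<beta>)
     \<and> (\<forall>m\<ge>2. vinf \<beta> m = vinf \<beta> (m - 1) / (1 - \<beta>)
                + \<beta> / (1 - \<beta>) * (\<Sum>j=1..m-1. vinf \<beta> j * vinf \<beta> (m - j)))
     \<and> \<comment> \<open>(iv) generating function, as an identity of convergent power series near 0\<close>
     (\<exists>r>0. (\<forall>x. \<bar>x\<bar> < r \<longrightarrow> summable (\<lambda>m. vinf \<beta> (m + 1) * x ^ m)) \<and>
        (\<forall>x. 0 < \<bar>x\<bar> \<and> \<bar>x\<bar> < r \<longrightarrow>
           (\<lambda>m. vinf \<beta> (m + 1) * x ^ m) sums
             ((1 - \<beta> - x - sqrt ((1 - \<beta> - x)\<^sup>2 - 4 * \<beta> * x)) / (2 * \<beta> * x))))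
     \<and> \<comment> \<open>(v) Narayana\<close>
     (\<forall>m\<ge>1. vinf \<beta> (m + 1) = narayana m \<beta> / (1 - \<beta>) ^ (2 * m + 1))"
proof -
  have P1: "(\<forall>(D :: nat \<Rightarrow> nat \<Rightarrow> 'a::real_vector list \<Rightarrow> 'a).
        multilinear_family D \<longrightarrow> (\<forall>s. D s = D 0) \<longrightarrow>
        (\<forall>m l n. 1 \<le> m \<longrightarrow> 1 \<le> l \<longrightarrow>
            E \<beta> D (chain m) l n = vv \<beta> m l n *\<^sub>R (((\<lambda>x. D 0 2 [x]) ^^ (m - 1)) (D 0 1 [])))
        \<and> (\<forall>m n. 2 \<le> m \<longrightarrow>
            - \<beta> *\<^sub>R E \<beta> D (chain m) 1 n = (- \<beta> * v \<beta> m n) *\<^sub>R (((\<lambda>x. D 0 2 [x]) ^^ (m - 1)) (D 0 1 []))))"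
  proof (intro allI impI)
    fix D :: "nat \<Rightarrow> nat \<Rightarrow> 'a::real_vector list \<Rightarrow> 'a"
    assume ml: "multilinear_family D" and fb: "\<forall>s. D s = D 0"
    have gen: "E \<beta> D (chain m) l n = vv \<beta> m l n *\<^sub>R (((\<lambda>x. D 0 2 [x]) ^^ (m - 1)) (D 0 1 []))"
      if "1 \<le> m" for m l n
    proof -
      have "m = Suc (m - 1)" using that by simp
      then show ?thesis using E_chain[OF ml fb, of \<beta> "m - 1" l n] by simp
    qed
    show "(\<forall>m l n. 1 \<le> m \<longrightarrow> 1 \<le> l \<longrightarrow>
            E \<beta> D (chain m) l n = vv \<beta> m l n *\<^sub>R (((\<lambda>x. D 0 2 [x]) ^^ (m - 1)) (D 0 1 [])))
        \<and> (\<forall>m n. 2 \<le> m \<longrightarrow>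
            - \<beta> *\<^sub>R E \<beta> D (chain m) 1 n = (- \<beta> * v \<beta> m n) *\<^sub>R (((\<lambda>x. D 0 2 [x]) ^^ (m - 1)) (D 0 1 [])))"
    proof (intro conjI allI impI)
      fix m l n :: nat assume "1 \<le> m" "1 \<le> l"
      then show "E \<beta> D (chain m) l n = vv \<beta> m l n *\<^sub>R (((\<lambda>x. D 0 2 [x]) ^^ (m - 1)) (D 0 1 []))"
        using gen by blast
    next
      fix m n :: nat assume "2 \<le> m"
      then have "E \<beta> D (chain m) 1 n = vv \<beta> m 1 n *\<^sub>R (((\<lambda>x. D 0 2 [x]) ^^ (m - 1)) (D 0 1 []))"
        using gen by simp
      then show "- \<beta> *\<^sub>R E \<beta> D (chain m) 1 n = (- \<beta> * v \<beta> m n) *\<^sub>R (((\<lambda>x. D 0 2 [x]) ^^ (m - 1)) (D 0 1 []))"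
        unfolding v_def by simp
    qed
  qed
  have P2: "\<forall>m n. 2 \<le> m \<longrightarrow> 1 \<le> n \<longrightarrow>
        v \<beta> m n = v \<beta> (m - 1) n + \<beta> * (\<Sum>j=1..m-1. v \<beta> j (n - 1) * v \<beta> (m - j) n)
                   + \<beta> * v \<beta> m (n - 1)"
    using part_ii by blast
  have P3: "\<forall>m\<ge>1. convergent (\<lambda>n. v \<beta> m n)"
    using v_conv[OF beta] unfolding convergent_def by blast
  have P4: "\<forall>m\<ge>2. vinf \<beta> m = vinf \<beta> (m - 1) / (1 - \<beta>)
                + \<beta> / (1 - \<beta>) * (\<Sum>j=1..m-1. vinf \<beta> j * vinf \<beta> (m - j))"
    using vinf_rec2[OF beta] by blast
  have P5: "\<exists>r>0. (\<forall>x. \<bar>x\<bar> < r \<longrightarrow> summable (\<lambda>m. vinf \<beta> (m + 1) * x ^ m)) \<and>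
        (\<forall>x. 0 < \<bar>x\<bar> \<and> \<bar>x\<bar> < r \<longrightarrow>
           (\<lambda>m. vinf \<beta> (m + 1) * x ^ m) sums
             ((1 - \<beta> - x - sqrt ((1 - \<beta> - x)\<^sup>2 - 4 * \<beta> * x)) / (2 * \<beta> * x)))"
  proof (rule gen_fun[OF beta, of "\<lambda>m. vinf \<beta> (m + 1)"])
    show "(1 - \<beta>) * vinf \<beta> (0 + 1) = 1" using vinf_one[OF beta] beta by simp
    fix m
    show "(1 - \<beta>) * vinf \<beta> (Suc m + 1) = vinf \<beta> (m + 1) + \<beta> * (\<Sum>i = 0..m. vinf \<beta> (i + 1) * vinf \<beta> (m - i + 1))"
      using a_rec[OF beta, of m] by simp
    show "\<bar>vinf \<beta> (m + 1)\<bar> \<le> 1 / (1 - \<beta>) * (4 / (1 - \<beta>)\<^sup>2) ^ m" by (rule vinf_bound[OF beta])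
  qed
  have P6: "\<forall>m\<ge>1. vinf \<beta> (m + 1) = narayana m \<beta> / (1 - \<beta>) ^ (2 * m + 1)"
    using vinf_nar[OF beta] by blast
  show ?thesis using P1 P2 P3 vinf_one[OF beta] P4 P5 P6 by blast
qed

end
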